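(* Let $\rho_a$ be a Borel probability measure on $\mathbb{R}^n$, $\rho_b$ a Borel probability measure on $\mathbb{R}^m$, and $c:\mathbb{R}^n\times\mathbb{R}^m\to\mathbb{R}$ a continuous cost bounded from below. If the max-min problem $\sup_f\inf_T\mathcal{L}(T,f)$ admits a saddle point $(\bar T,\bar f)$, then $\mathcal{L}(\bar T,\bar f)=C(\rho_a,\rho_b)$.
   Context: The general OT cost is $C(\rho_a,\rho_b)=\inf_{\pi\in\Pi(\rho_a,\rho_b)}\int c(x,y)\,d\pi(x,y)$, where $\Pi(\rho_a,\rho_b)$ is the set of probability measures on $\mathbb{R}^n\times\mathbb{R}^m$ with marginals $\rho_a$ and $\rho_b$. The Lagrangian is, for Borel maps $T:\mathbb{R}^n\to\mathbb{R}^m$ and functions $f\in L^1(\rho_b)$, $$\mathcal{L}(T,f)=\int_{\mathbb{R}^n}\big[c(x,T(x))-f(T(x))\big]\,d\rho_a(x)+\int_{\mathbb{R}^m}f(y)\,d\rho_b(y),$$ with the first integral understood as an extended real number whenever it is well defined (values in $(-\infty,+\infty]$ allowed). A saddle point $(\bar T,\bar f)$ means $\mathcal{L}(\bar T,f)\le\mathcal{L}(\bar T,\bar f)\le\mathcal{L}(T,\bar f)$ for all admissible $T,f$. *)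

theory Defs
  imports "HOL-Probability.Probability"
begin

definition ext_integral :: "'a measure \<Rightarrow> ('a \<Rightarrow> real) \<Rightarrow> ereal" where
  "ext_integral M g =
     enn2ereal (\<integral>\<^sup>+ x. ennreal (g x) \<partial>M) - enn2ereal (\<integral>\<^sup>+ x. ennreal (- g x) \<partial>M)"

definition ext_integral_defined :: "'a measure \<Rightarrow> ('a \<Rightarrow> real) \<Rightarrow> bool" where
  "ext_integral_defined M g \<longleftrightarrow> g \<in> borel_measurable M \<and>
     ((\<integral>\<^sup>+ x. ennreal (g x) \<partial>M) < \<infinity> \<or> (\<integral>\<^sup>+ x. ennreal (- g x) \<partial>M) < \<infinity>)"

definition couplings :: "'a::euclidean_space measure \<Rightarrow> 'b::euclidean_space measure \<Rightarrow> ('a \<times> 'b) measure set" where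
  "couplings \<rho>a \<rho>b = {\<pi>. prob_space \<pi> \<and> sets \<pi> = sets borel \<and>
      distr \<pi> borel fst = \<rho>a \<and> distr \<pi> borel snd = \<rho>b}"

definition OT_cost :: "('a::euclidean_space \<times> 'b::euclidean_space \<Rightarrow> real) \<Rightarrow> 'a measure \<Rightarrow> 'b measure \<Rightarrow> ereal" where
  "OT_cost c \<rho>a \<rho>b = (INF \<pi> \<in> couplings \<rho>a \<rho>b. ext_integral \<pi> c)"

definition lagrangian :: "('a \<times> 'b \<Rightarrow> real) \<Rightarrow> 'a measure \<Rightarrow> 'b measure \<Rightarrow> ('a \<Rightarrow> 'b) \<Rightarrow> ('b \<Rightarrow> real) \<Rightarrow> ereal" where
  "lagrangian c \<rho>a \<rho>b T f =
     ext_integral \<rho>a (\<lambda>x. c (x, T x) - f (T x)) + ereal (\<integral>y. f y \<partial>\<rho>b)"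

definition lagrangian_defined :: "('a \<times> 'b \<Rightarrow> real) \<Rightarrow> 'a measure \<Rightarrow> ('a \<Rightarrow> 'b) \<Rightarrow> ('b \<Rightarrow> real) \<Rightarrow> bool" where
  "lagrangian_defined c \<rho>a T f = ext_integral_defined \<rho>a (\<lambda>x. c (x, T x) - f (T x))"

end

theory Submission
  imports Defs
begin

lemma enn2ereal_fin: "a < \<infinity> \<Longrightarrow> enn2ereal a = ereal (enn2real a)"
  by (cases a rule: ennreal_cases) (auto simp: enn2ereal_ennreal)

lemma int_parts:
  assumes "integrable M f"
  shows "(\<integral>\<^sup>+ x. ennreal (f x) \<partial>M) < \<infinity>" "(\<integral>\<^sup>+ x. ennreal (- f x) \<partial>M) < \<infinity>"
  using integrableD(2,3)[OF assms] by (simp_all add: less_top)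

lemma ext_int:
  assumes "integrable M f"
  shows "ext_integral M f = ereal (integral\<^sup>L M f)"
  unfolding ext_integral_def real_lebesgue_integral_def[OF assms]
  by (simp add: enn2ereal_fin[OF int_parts(1)[OF assms]] enn2ereal_fin[OF int_parts(2)[OF assms]])

lemma ext_distr:
  assumes T: "T \<in> M \<rightarrow>\<^sub>M N" and f: "f \<in> borel_measurable N"
  shows "ext_integral (distr M N T) f = ext_integral M (\<lambda>x. f (T x))"
    "ext_integral_defined (distr M N T) f = ext_integral_defined M (\<lambda>x. f (T x))"
proof -
  have 1: "(\<integral>\<^sup>+ x. ennreal (f x) \<partial>distr M N T) = (\<integral>\<^sup>+ x. ennreal (f (T x)) \<partial>M)"
    using T f by (intro nn_integral_distr) auto
  have 2: "(\<integral>\<^sup>+ x. ennreal (- f x) \<partial>distr M N T) = (\<integral>\<^sup>+ x. ennreal (- f (T x)) \<partial>M)"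
    using T f by (intro nn_integral_distr) auto
  show "ext_integral (distr M N T) f = ext_integral M (\<lambda>x. f (T x))"
    unfolding ext_integral_def 1 2 ..
  have m: "(\<lambda>x. f (T x)) \<in> borel_measurable M" using T f by measurable
  show "ext_integral_defined (distr M N T) f = ext_integral_defined M (\<lambda>x. f (T x))"
    unfolding ext_integral_defined_def 1 2 using m f by simp
qed

lemma ext_mono:
  assumes f: "f \<in> borel_measurable M" and w: "integrable M w" and le: "\<And>x. x \<in> space M \<Longrightarrow> f x \<le> w x"
  shows "ext_integral M f \<le> ereal (integral\<^sup>L M w)" "ext_integral_defined M f"
proof -
  note a = int_parts(1)[OF w]
  have c: "(\<integral>\<^sup>+ x. ennreal (f x) \<partial>M) \<le> (\<integral>\<^sup>+ x. ennreal (w x) \<partial>M)"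
    using le by (intro nn_integral_mono) (simp add: ennreal_leI)
  have d: "(\<integral>\<^sup>+ x. ennreal (- w x) \<partial>M) \<le> (\<integral>\<^sup>+ x. ennreal (- f x) \<partial>M)"
    using le by (intro nn_integral_mono) (simp add: ennreal_leI)
  show "ext_integral_defined M f" unfolding ext_integral_defined_def using f a c by auto
  have "ext_integral M f \<le> ext_integral M w"
    unfolding ext_integral_def
    by (rule ereal_minus_mono) (use c d in \<open>auto simp: less_eq_ennreal.rep_eq[symmetric]\<close>)
  then show "ext_integral M f \<le> ereal (integral\<^sup>L M w)" using ext_int[OF w] by simp
qed

lemma ext_lb:
  assumes P: "prob_space M" and f: "f \<in> borel_measurable M" and lb: "\<And>x. x \<in> space M \<Longrightarrow> a \<le> f x"
  shows "ext_integral_defined M f" "ext_integral M f \<noteq> -\<infinity>"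
proof -
  have "(\<integral>\<^sup>+ x. ennreal (- f x) \<partial>M) \<le> (\<integral>\<^sup>+ x. ennreal (- a) \<partial>M)"
    using lb by (intro nn_integral_mono) (simp add: ennreal_leI)
  also have "\<dots> = ennreal (- a)" using prob_space.emeasure_space_1[OF P] by simp
  finally have n: "(\<integral>\<^sup>+ x. ennreal (- f x) \<partial>M) < \<infinity>" by (simp add: le_less_trans)
  show "ext_integral_defined M f" unfolding ext_integral_defined_def using f n by auto
  show "ext_integral M f \<noteq> -\<infinity>" unfolding ext_integral_def enn2ereal_fin[OF n]
    by (cases "enn2ereal (\<integral>\<^sup>+ x. ennreal (f x) \<partial>M)") auto
qed

lemma ext_fin_integrable:
  assumes f: "f \<in> borel_measurable M" and a: "ext_integral M f \<noteq> \<infinity>" and b: "ext_integral M f \<noteq> -\<infinity>"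
  shows "integrable M f"
proof -
  let ?p = "\<integral>\<^sup>+ x. ennreal (f x) \<partial>M" and ?n = "\<integral>\<^sup>+ x. ennreal (- f x) \<partial>M"
  have p: "?p < \<infinity>"
  proof (rule ccontr)
    assume "\<not> ?p < \<infinity>" then have "?p = \<infinity>" by (simp add: less_top[symmetric])
    then show False using a unfolding ext_integral_def by simp
  qed
  have n: "?n < \<infinity>"
  proof (rule ccontr)
    assume "\<not> ?n < \<infinity>" then have "?n = \<infinity>" by (simp add: less_top[symmetric])
    then show False using b unfolding ext_integral_def enn2ereal_fin[OF p] by simp
  qed
  have eq: "ennreal (norm (f x)) = ennreal (f x) + ennreal (- f x)" for x
    by (cases "f x \<ge> 0") (auto simp: ennreal_neg)
  have "(\<integral>\<^sup>+ x. ennreal (norm (f x)) \<partial>M) = ?p + ?n"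
    unfolding eq using f by (intro nn_integral_add) auto
  also have "\<dots> < \<infinity>" using p n by (simp add: less_top)
  finally show ?thesis using f by (intro integrableI_bounded) auto
qed

lemma selection:
  fixes c :: "'a::euclidean_space \<times> 'b::euclidean_space \<Rightarrow> real" and fb :: "'b \<Rightarrow> real"
  assumes c: "continuous_on UNIV c" and fb: "fb \<in> borel_measurable borel" and d: "\<delta> > 0"
  shows "\<exists>T \<in> borel_measurable borel. \<forall>x y. c (x, T x) - fb (T x) \<le> max (c (x, y) - fb y) (-K) + 3*\<delta>"
proof -
  define L where "L q = {y. real_of_int q * \<delta> \<le> fb y \<and> fb y < real_of_int (q+1) * \<delta>}" for q :: int
  have ex: "\<exists>D. countable D \<and> D \<subseteq> L q \<and> L q \<subseteq> closure D" for q
    by (rule separable) blast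
  define D where "D q = (SOME D. countable D \<and> D \<subseteq> L q \<and> L q \<subseteq> closure D)" for q
  have D0: "countable (D q) \<and> D q \<subseteq> L q \<and> L q \<subseteq> closure (D q)" for q
    unfolding D_def by (rule someI_ex[OF ex])
  have D: "\<And>q. countable (D q)" "\<And>q. D q \<subseteq> L q" "\<And>q. L q \<subseteq> closure (D q)"
    using D0 by auto
  define S where "S = Sigma UNIV D"
  have cS: "countable S" unfolding S_def by (intro countable_SIGMA) (auto simp: D)
  have qy: "y \<in> L \<lfloor>fb y / \<delta>\<rfloor>" for y
  proof -
    have "real_of_int \<lfloor>fb y / \<delta>\<rfloor> * \<delta> \<le> fb y" "fb y < (real_of_int \<lfloor>fb y / \<delta>\<rfloor> + 1) * \<delta>"
      using floor_divide_lower[OF d] floor_divide_upper[OF d] by auto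
    then show ?thesis unfolding L_def by (auto simp: algebra_simps)
  qed
  have Sne: "S \<noteq> {}"
  proof -
    have "0 \<in> closure (D \<lfloor>fb 0 / \<delta>\<rfloor>)" using qy D(3) by blast
    then obtain d where "d \<in> D \<lfloor>fb 0 / \<delta>\<rfloor>" by (cases "D \<lfloor>fb 0 / \<delta>\<rfloor> = {}") auto
    then show ?thesis unfolding S_def by auto
  qed
  define s where "s = from_nat_into S"
  have sS: "s n \<in> S" for n unfolding s_def using Sne by (rule from_nat_into)
  have Ss: "\<exists>n. s n = p" if "p \<in> S" for p unfolding s_def using from_nat_into_surj[OF cS that] by metis
  define v where "v x n = max (c (x, snd (s n)) - real_of_int (fst (s n)) * \<delta>) (-K)" for x n
  define \<Psi> where "\<Psi> x = (INF n. ereal (v x n))" for x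
  have key1: "c (x, snd (s n)) - fb (snd (s n)) \<le> v x n" for x n
  proof -
    have "snd (s n) \<in> L (fst (s n))" using sS[of n] D(2) unfolding S_def by (cases "s n") auto
    then show ?thesis unfolding v_def L_def by auto
  qed
  have key2: "\<exists>n. v x n < max (c (x, y) - fb y) (-K) + 2*\<delta>" for x y
  proof -
    define q where "q = \<lfloor>fb y / \<delta>\<rfloor>"
    have yL: "y \<in> L q" unfolding q_def by (rule qy)
    have cc: "continuous_on UNIV (\<lambda>y. c (x, y))"
      by (rule continuous_on_compose2[OF c]) (auto intro: continuous_intros)
    then obtain e where e: "e > 0" "\<And>y'. dist y' y < e \<Longrightarrow> dist (c (x, y')) (c (x, y)) < \<delta>"
      using d unfolding continuous_on_iff by blast
    have "y \<in> closure (D q)" using yL D(3) by blast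
    then obtain dd where dd: "dd \<in> D q" "dist dd y < e" using e(1) by (auto simp: closure_approachable)
    then have "(q, dd) \<in> S" unfolding S_def by auto
    then obtain n where n: "s n = (q, dd)" using Ss by blast
    have "c (x, dd) < c (x, y) + \<delta>" using e(2)[OF dd(2)] by (auto simp: dist_real_def)
    moreover have "fb y < real_of_int q * \<delta> + \<delta>" using yL unfolding L_def by (auto simp: algebra_simps)
    ultimately have "c (x, dd) - real_of_int q * \<delta> < c (x, y) - fb y + 2*\<delta>" by linarith
    then have "v x n < max (c (x, y) - fb y) (-K) + 2*\<delta>" unfolding v_def n using d by auto
    then show ?thesis by blast
  qed
  have Psi_lb: "ereal (-K) \<le> \<Psi> x" for x unfolding \<Psi>_def v_def by (intro INF_greatest) auto
  have Psi_ub: "\<Psi> x \<le> ereal (v x n)" for x n unfolding \<Psi>_def by (rule INF_lower) auto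
  have Psi_fin: "\<bar>\<Psi> x\<bar> \<noteq> \<infinity>" for x
    using Psi_lb[of x] Psi_ub[of x 0] by auto
  define P where "P n x \<longleftrightarrow> ereal (v x n) < \<Psi> x + ereal \<delta>" for n x
  have exP: "\<exists>n. P n x" for x
  proof -
    have "\<Psi> x < \<Psi> x + ereal \<delta>" using Psi_fin[of x] d by (cases "\<Psi> x") auto
    then show ?thesis unfolding P_def using INF_less_iff[of "\<lambda>n. ereal (v x n)" UNIV] \<Psi>_def by auto
  qed
  define N where "N x = (LEAST n. P n x)" for x
  define T where "T x = snd (s (N x))" for x
  have cm: "c \<in> borel_measurable borel" using c by (rule borel_measurable_continuous_onI)
  have vm: "(\<lambda>x. v x n) \<in> borel_measurable borel" for n
    unfolding v_def using cm by measurable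
  have Pm: "Measurable.pred borel (P n)" for n
  proof -
    have "\<Psi> \<in> borel_measurable borel" unfolding \<Psi>_def
      by (rule borel_measurable_INF) (use vm in auto)
    then show ?thesis unfolding P_def using vm[of n] by measurable
  qed
  have Nm: "N \<in> borel \<rightarrow>\<^sub>M count_space UNIV" unfolding N_def by (rule measurable_Least) (rule Pm)
  have Tm: "T \<in> borel_measurable borel" unfolding T_def
    by (rule measurable_compose[OF Nm]) simp
  have "c (x, T x) - fb (T x) \<le> max (c (x, y) - fb y) (-K) + 3*\<delta>" for x y
  proof -
    have PN: "P (N x) x" unfolding N_def by (rule LeastI_ex) (rule exP)
    obtain n where n: "v x n < max (c (x, y) - fb y) (-K) + 2*\<delta>" using key2 by blast
    have "ereal (c (x, T x) - fb (T x)) \<le> ereal (v x (N x))" using key1 unfolding T_def by simp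
    also have "\<dots> < \<Psi> x + ereal \<delta>" using PN unfolding P_def .
    also have "\<dots> \<le> ereal (v x n) + ereal \<delta>" using Psi_ub by (intro add_right_mono) auto
    finally show ?thesis using n by simp
  qed
  then show ?thesis using Tm by blast
qed

theorem theorem3:
  fixes \<rho>a :: "'a::euclidean_space measure" and \<rho>b :: "'b::euclidean_space measure"
    and c :: "'a \<times> 'b \<Rightarrow> real"
    and Tbar :: "'a \<Rightarrow> 'b" and fbar :: "'b \<Rightarrow> real"
  assumes "prob_space \<rho>a" and "sets \<rho>a = sets borel"
    and "prob_space \<rho>b" and "sets \<rho>b = sets borel"
    and "continuous_on UNIV c" and "\<exists>M. \<forall>z. M \<le> c z"
    and "Tbar \<in> borel_measurable borel" and "integrable \<rho>b fbar"
    and "lagrangian_defined c \<rho>a Tbar fbar"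
    and "\<forall>f. integrable \<rho>b f \<and> lagrangian_defined c \<rho>a Tbar f \<longrightarrow>
           lagrangian c \<rho>a \<rho>b Tbar f \<le> lagrangian c \<rho>a \<rho>b Tbar fbar"
    and "\<forall>T. T \<in> borel_measurable borel \<and> lagrangian_defined c \<rho>a T fbar \<longrightarrow>
           lagrangian c \<rho>a \<rho>b Tbar fbar \<le> lagrangian c \<rho>a \<rho>b T fbar"
  shows "lagrangian c \<rho>a \<rho>b Tbar fbar = OT_cost c \<rho>a \<rho>b"
proof -
  note pa = assms(1) and sa = assms(2) and pb = assms(3) and sb = assms(4) and cc = assms(5)
    and Tm = assms(7) and fi = assms(8) and sp1 = assms(10) and sp2 = assms(11)
  obtain M where cM: "\<And>z. M \<le> c z" using assms(6) by blast
  define \<Lambda> where "\<Lambda> = lagrangian c \<rho>a \<rho>b Tbar fbar"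
  define g where "g x = c (x, Tbar x) - fbar (Tbar x)" for x
  have Lam: "\<Lambda> = ext_integral \<rho>a g + ereal (integral\<^sup>L \<rho>b fbar)"
    unfolding \<Lambda>_def lagrangian_def g_def ..
  have cm: "c \<in> borel_measurable borel" using cc by (rule borel_measurable_continuous_onI)
  have fbm: "fbar \<in> borel_measurable borel"
    using borel_measurable_integrable[OF fi] measurable_cong_sets[OF sb refl] by blast
  have ma: "\<And>f. (f \<in> borel_measurable \<rho>a) = (f \<in> borel_measurable borel)"
    using measurable_cong_sets[OF sa refl] by blast
  have spa: "space \<rho>a = UNIV" using sets_eq_imp_space_eq[OF sa] by simp
  have Tm': "Tbar \<in> \<rho>a \<rightarrow>\<^sub>M borel" using measurable_cong_sets[OF sa refl] Tm by blast
  have fstb: "(fst :: 'a \<times> 'b \<Rightarrow> 'a) \<in> borel \<rightarrow>\<^sub>M borel"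
    using measurable_fst[of "borel :: 'a measure" "borel :: 'b measure"] unfolding borel_prod .
  have sndb: "(snd :: 'a \<times> 'b \<Rightarrow> 'b) \<in> borel \<rightarrow>\<^sub>M borel"
    using measurable_snd[of "borel :: 'a measure" "borel :: 'b measure"] unfolding borel_prod .
  have gm: "g \<in> borel_measurable borel" unfolding g_def using cm fbm Tm by measurable

  have Lnm: "\<Lambda> \<noteq> -\<infinity>"
  proof -
    let ?f0 = "\<lambda>y::'b. 0::real"
    have cTm: "(\<lambda>x. c (x, Tbar x) - ?f0 (Tbar x)) \<in> borel_measurable \<rho>a"
      unfolding ma using cm Tm by measurable
    have d0: "ext_integral_defined \<rho>a (\<lambda>x. c (x, Tbar x) - ?f0 (Tbar x))"
         "ext_integral \<rho>a (\<lambda>x. c (x, Tbar x) - ?f0 (Tbar x)) \<noteq> -\<infinity>"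
      using ext_lb[OF pa cTm, of M] cM by auto
    have "lagrangian c \<rho>a \<rho>b Tbar ?f0 \<le> \<Lambda>"
      using sp1 d0(1) unfolding \<Lambda>_def lagrangian_defined_def by auto
    moreover have "lagrangian c \<rho>a \<rho>b Tbar ?f0 \<noteq> -\<infinity>"
      using d0(2) unfolding lagrangian_def by simp
    ultimately show ?thesis by auto
  qed

  have part1: "OT_cost c \<rho>a \<rho>b \<le> \<Lambda>"
  proof (cases "\<Lambda> = \<infinity>")
    case True then show ?thesis by simp
  next
    case False
    have gfin: "ext_integral \<rho>a g \<noteq> \<infinity>" "ext_integral \<rho>a g \<noteq> -\<infinity>"
      using False Lnm unfolding Lam by auto
    have gi: "integrable \<rho>a g"
      using ext_fin_integrable[OF _ gfin] gm ma by blast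
    have Lg: "\<Lambda> = ereal (integral\<^sup>L \<rho>a g + integral\<^sup>L \<rho>b fbar)"
      unfolding Lam ext_int[OF gi] by simp
    have push: "distr \<rho>a borel Tbar = \<rho>b"
    proof (rule measure_eqI)
      show "sets (distr \<rho>a borel Tbar) = sets \<rho>b" using sb by simp
      fix B assume "B \<in> sets (distr \<rho>a borel Tbar)"
      then have B: "B \<in> sets borel" by simp
      have Bb: "B \<in> sets \<rho>b" using B sb by simp
      have pre: "Tbar -` B \<in> sets \<rho>a" using measurable_sets[OF Tm' B] spa by simp
      have eqind: "\<And>x. indicator B (Tbar x) = (indicator (Tbar -` B) x :: real)"
        by (simp split: split_indicator)
      have ind_a: "integrable \<rho>a (\<lambda>x. indicator B (Tbar x) :: real)"
        unfolding eqind using pre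
        by (intro integrable_real_indicator) (auto simp: prob_space.emeasure_space_1[OF pa] finite_measure.emeasure_finite prob_space.finite_measure[OF pa] less_top[symmetric])
      have ind_b: "integrable \<rho>b (indicator B :: 'b \<Rightarrow> real)"
        using Bb
        by (intro integrable_real_indicator) (auto simp: finite_measure.emeasure_finite prob_space.finite_measure[OF pb] less_top[symmetric])
      have iaB: "integral\<^sup>L \<rho>a (\<lambda>x. indicator B (Tbar x) :: real) = measure \<rho>a (Tbar -` B)"
        unfolding eqind by (simp add: spa)
      have ibB: "integral\<^sup>L \<rho>b (indicator B :: 'b \<Rightarrow> real) = measure \<rho>b B"
        using sets_eq_imp_space_eq[OF sb] by simp
      have key: "t * (measure \<rho>b B - measure \<rho>a (Tbar -` B)) \<le> 0" for t :: real
      proof -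
        define f where "f y = fbar y + t * indicator B y" for y
        have fi': "integrable \<rho>b f" unfolding f_def using fi ind_b by auto
        have gi': "integrable \<rho>a (\<lambda>x. c (x, Tbar x) - f (Tbar x))"
        proof -
          have "(\<lambda>x. c (x, Tbar x) - f (Tbar x)) = (\<lambda>x. g x - t * indicator B (Tbar x))"
            unfolding f_def g_def by auto
          then show ?thesis using gi ind_a by auto
        qed
        have def': "lagrangian_defined c \<rho>a Tbar f"
          unfolding lagrangian_defined_def ext_integral_defined_def
          using int_parts[OF gi'] gi' by auto
        have "lagrangian c \<rho>a \<rho>b Tbar f
           = ereal (integral\<^sup>L \<rho>a g - t * measure \<rho>a (Tbar -` B) + (integral\<^sup>L \<rho>b fbar + t * measure \<rho>b B))"
        proof -
          have "integral\<^sup>L \<rho>a (\<lambda>x. c (x, Tbar x) - f (Tbar x)) = integral\<^sup>L \<rho>a g - t * measure \<rho>a (Tbar -` B)"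
          proof -
            have "(\<lambda>x. c (x, Tbar x) - f (Tbar x)) = (\<lambda>x. g x - t * indicator B (Tbar x))"
              unfolding f_def g_def by auto
            then show ?thesis using gi ind_a iaB by simp
          qed
          moreover have "integral\<^sup>L \<rho>b f = integral\<^sup>L \<rho>b fbar + t * measure \<rho>b B"
            unfolding f_def using fi ind_b ibB by simp
          ultimately show ?thesis unfolding lagrangian_def ext_int[OF gi'] by simp
        qed
        moreover have "lagrangian c \<rho>a \<rho>b Tbar f \<le> \<Lambda>" using sp1 fi' def' unfolding \<Lambda>_def by blast
        ultimately show ?thesis unfolding Lg by (simp add: algebra_simps)
      qed
      have "measure \<rho>b B = measure \<rho>a (Tbar -` B)"
        using key[of 1] key[of "-1"] by simp
      then show "emeasure (distr \<rho>a borel Tbar) B = emeasure \<rho>b B"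
        using Tm' B
        by (simp add: emeasure_distr spa finite_measure.emeasure_eq_measure prob_space.finite_measure[OF pa] prob_space.finite_measure[OF pb])
    qed
    define \<pi>0 where "\<pi>0 = distr \<rho>a borel (\<lambda>x. (x, Tbar x))"
    have pm: "(\<lambda>x. (x, Tbar x)) \<in> \<rho>a \<rightarrow>\<^sub>M borel"
      using Tm' measurable_cong_sets[OF sa refl] by (intro borel_measurable_Pair) (auto simp: ma)
    have coup: "\<pi>0 \<in> couplings \<rho>a \<rho>b"
    proof -
      have "prob_space \<pi>0" unfolding \<pi>0_def using pa pm by (rule prob_space.prob_space_distr)
      moreover have "sets \<pi>0 = sets borel" unfolding \<pi>0_def by simp
      moreover have "distr \<pi>0 borel fst = \<rho>a"
      proof -
        have "distr \<pi>0 borel fst = distr \<rho>a borel (fst \<circ> (\<lambda>x. (x, Tbar x)))"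
          unfolding \<pi>0_def by (rule distr_distr) (auto intro: pm fstb sndb)
        also have "\<dots> = distr \<rho>a borel (\<lambda>x. x)" by (simp add: comp_def)
        also have "\<dots> = \<rho>a" using sa by (intro distr_id2) simp
        finally show ?thesis .
      qed
      moreover have "distr \<pi>0 borel snd = \<rho>b"
      proof -
        have "distr \<pi>0 borel snd = distr \<rho>a borel (snd \<circ> (\<lambda>x. (x, Tbar x)))"
          unfolding \<pi>0_def by (rule distr_distr) (auto intro: pm fstb sndb)
        also have "\<dots> = distr \<rho>a borel Tbar" by (simp add: comp_def)
        finally show ?thesis using push by simp
      qed
      ultimately show ?thesis unfolding couplings_def by auto
    qed
    have fTi: "integrable \<rho>a (\<lambda>x. fbar (Tbar x))"
      using fi unfolding push[symmetric] using integrable_distr_eq[OF Tm' fbm] by simp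
    have fTint: "integral\<^sup>L \<rho>a (\<lambda>x. fbar (Tbar x)) = integral\<^sup>L \<rho>b fbar"
      unfolding push[symmetric] using integral_distr[OF Tm' fbm] by simp
    have "ext_integral \<pi>0 c = ext_integral \<rho>a (\<lambda>x. c (x, Tbar x))"
      unfolding \<pi>0_def by (rule ext_distr(1)[OF pm cm])
    also have "\<dots> = ext_integral \<rho>a (\<lambda>x. g x + fbar (Tbar x))" unfolding g_def by simp
    also have "\<dots> = ereal (integral\<^sup>L \<rho>a g + integral\<^sup>L \<rho>b fbar)"
      using gi fTi fTint by (subst ext_int) auto
    finally have "ext_integral \<pi>0 c = \<Lambda>" using Lg by simp
    then show ?thesis unfolding OT_cost_def using coup by (metis INF_lower)
  qed

  have part2: "\<Lambda> \<le> ext_integral \<pi> c" if coup: "\<pi> \<in> couplings \<rho>a \<rho>b" for \<pi>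
  proof (cases "ext_integral \<pi> c = \<infinity>")
    case True then show ?thesis by simp
  next
    case False
    have P: "prob_space \<pi>" and sp: "sets \<pi> = sets borel" and m1: "distr \<pi> borel fst = \<rho>a"
      and m2: "distr \<pi> borel snd = \<rho>b"
      using coup unfolding couplings_def by auto
    have mp: "\<And>f. (f \<in> borel_measurable \<pi>) = (f \<in> borel_measurable borel)"
      using measurable_cong_sets[OF sp refl] by blast
    have fstm: "fst \<in> \<pi> \<rightarrow>\<^sub>M borel" and sndm: "snd \<in> \<pi> \<rightarrow>\<^sub>M borel"
      using measurable_cong_sets[OF sp refl] fstb sndb by auto
    have cmp: "c \<in> borel_measurable \<pi>" using cm mp by blast
    have ci: "integrable \<pi> c"
      using ext_fin_integrable[OF cmp False ext_lb(2)[OF P cmp cM]] .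
    have fsi: "integrable \<pi> (\<lambda>z. fbar (snd z))"
      using fi unfolding m2[symmetric] using integrable_distr_eq[OF sndm fbm] by simp
    have fsint: "integral\<^sup>L \<pi> (\<lambda>z. fbar (snd z)) = integral\<^sup>L \<rho>b fbar"
      unfolding m2[symmetric] using integral_distr[OF sndm fbm] by simp
    define H where "H z = c z - fbar (snd z)" for z
    have Hi: "integrable \<pi> H" unfolding H_def using ci fsi by auto
    have Hint: "integral\<^sup>L \<pi> H = integral\<^sup>L \<pi> c - integral\<^sup>L \<rho>b fbar"
      unfolding H_def using ci fsi fsint by simp
    have extc: "ext_integral \<pi> c = ereal (integral\<^sup>L \<pi> c)" by (rule ext_int[OF ci])
    have fmP: "finite_measure \<pi>" using P by (rule prob_space.finite_measure)
    show ?thesis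
    proof (rule ereal_le_epsilon2)
      fix e :: real assume e: "0 < e"
      define \<delta> where "\<delta> = e / 4"
      have d: "\<delta> > 0" using e unfolding \<delta>_def by simp
      define s where "s k z = max (H z) (- real k)" for k :: nat and z
      have si: "integrable \<pi> (s k)" for k
        unfolding s_def using Hi finite_measure.integrable_const[OF fmP] by (intro integrable_max) auto
      have conv: "(\<lambda>k. integral\<^sup>L \<pi> (s k)) \<longlonglongrightarrow> integral\<^sup>L \<pi> H"
      proof (rule integral_dominated_convergence[where w = "\<lambda>z. norm (H z)"])
        show "H \<in> borel_measurable \<pi>" using Hi by auto
        show "s k \<in> borel_measurable \<pi>" for k using si[of k] by auto
        show "integrable \<pi> (\<lambda>z. norm (H z))" using Hi by auto
        show "AE z in \<pi>. (\<lambda>k. s k z) \<longlonglongrightarrow> H z"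
        proof (rule AE_I2)
          fix z
          have "\<forall>\<^sub>F k in sequentially. s k z = H z"
          proof (rule eventually_sequentiallyI[of "nat \<lceil>- H z\<rceil>"])
            fix k assume "nat \<lceil>- H z\<rceil> \<le> k"
            then have "- H z \<le> real k" by linarith
            then show "s k z = H z" unfolding s_def by simp
          qed
          then show "(\<lambda>k. s k z) \<longlonglongrightarrow> H z" by (rule tendsto_eventually)
        qed
        show "AE z in \<pi>. norm (s k z) \<le> norm (H z)" for k
          by (rule AE_I2) (auto simp: s_def)
      qed
      from tendstoD[OF conv d] obtain k where "\<forall>n\<ge>k. dist (integral\<^sup>L \<pi> (s n)) (integral\<^sup>L \<pi> H) < \<delta>"
        by (auto simp: eventually_sequentially)
      then have k: "dist (integral\<^sup>L \<pi> (s k)) (integral\<^sup>L \<pi> H) < \<delta>" by simp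
      then have sk: "integral\<^sup>L \<pi> (s k) \<le> integral\<^sup>L \<pi> H + \<delta>" by (simp add: dist_real_def)
      obtain T where Tb: "T \<in> borel_measurable borel"
        and Tle: "\<And>x y. c (x, T x) - fbar (T x) \<le> max (c (x, y) - fbar y) (- real k) + 3 * \<delta>"
        using selection[OF cc fbm d, of "real k"] by blast
      define u where "u x = c (x, T x) - fbar (T x)" for x
      have um: "u \<in> borel_measurable borel" unfolding u_def using cm fbm Tb by measurable
      have ufm: "(\<lambda>z. u (fst z)) \<in> borel_measurable \<pi>" using um fstm by measurable
      have wi: "integrable \<pi> (\<lambda>z. s k z + 3 * \<delta>)"
        by (intro Bochner_Integration.integrable_add si finite_measure.integrable_const[OF fmP])
      have ule: "u (fst z) \<le> s k z + 3 * \<delta>" for z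
        using Tle[of "fst z" "snd z"] unfolding u_def s_def H_def by simp
      have em: "ext_integral \<pi> (\<lambda>z. u (fst z)) \<le> ereal (integral\<^sup>L \<pi> (\<lambda>z. s k z + 3 * \<delta>))"
        and ed: "ext_integral_defined \<pi> (\<lambda>z. u (fst z))"
        using ext_mono[OF ufm wi] ule by auto
      have wint: "integral\<^sup>L \<pi> (\<lambda>z. s k z + 3 * \<delta>) = integral\<^sup>L \<pi> (s k) + 3 * \<delta>"
        using si[of k] finite_measure.integrable_const[OF fmP, of "3 * \<delta>"] prob_space.prob_space[OF P]
        by (subst Bochner_Integration.integral_add) auto
      have eu: "ext_integral \<rho>a u = ext_integral \<pi> (\<lambda>z. u (fst z))"
        "ext_integral_defined \<rho>a u = ext_integral_defined \<pi> (\<lambda>z. u (fst z))"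
        using ext_distr[OF fstm um] unfolding m1 by auto
      have ldT: "lagrangian_defined c \<rho>a T fbar"
        unfolding lagrangian_defined_def using ed eu(2) unfolding u_def by simp
      have "\<Lambda> \<le> lagrangian c \<rho>a \<rho>b T fbar" using sp2 Tb ldT unfolding \<Lambda>_def by blast
      also have "\<dots> = ext_integral \<rho>a u + ereal (integral\<^sup>L \<rho>b fbar)"
        unfolding lagrangian_def u_def ..
      also have "\<dots> \<le> ereal (integral\<^sup>L \<pi> (s k) + 3 * \<delta>) + ereal (integral\<^sup>L \<rho>b fbar)"
        using em wint eu(1) by (intro add_right_mono) simp
      also have "\<dots> \<le> ereal (integral\<^sup>L \<pi> c + e)"
        using sk Hint unfolding \<delta>_def by simp
      finally show "\<Lambda> \<le> ext_integral \<pi> c + ereal e" using extc by simp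
    qed
  qed
  have "\<Lambda> \<le> OT_cost c \<rho>a \<rho>b" unfolding OT_cost_def using part2 by (rule INF_greatest)
  then show ?thesis using part1 unfolding \<Lambda>_def by simp
qed

end
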